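(* Let $\theta_c,\theta_r\in\mathbb{R}^d\setminus\{0\}$, $\theta_0\in\mathbb{R}^d$, $\eta>0$, and integers $B,T\ge1$. Let $\theta_t$ be the mini-batch SGD iterates $\theta_{t+1}=\theta_t-\eta g_t$, where $g_t=\frac1B\sum_{i=1}^B\nabla_\theta\mathcal{L}_{\mathrm{pref}}(x^{(t,i)},y_c^{(t,i)},y_r^{(t,i)};\theta_t)$ with fresh i.i.d. $x^{(t,i)}\sim\mathcal{N}(0,I_d)$, and let $\bar\theta_t$ be the population iterates $\bar\theta_0=\theta_0$, $\bar\theta_{t+1}=\bar\theta_t-\eta\,\mathbb{E}[g_t]=\bar\theta_t+\frac{\eta}{\sqrt{2\pi}}v_\Delta$. Fix $\delta\in(0,1)$ and suppose $d>\frac14\ln(2BT/\delta)$. Then with probability at least $1-\delta$, $$\|\theta_T-\bar\theta_T\|_2\le\eta\left[\sqrt{\frac{2dT}{B}\ln\frac{2(d+1)}{\delta}}+4\sqrt d\,\ln\frac{2(d+1)}{\delta}\right].$$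
   Context: Pseudo-labels are $y_c=\mathbb{1}\{\langle\theta_c,x\rangle\ge0\}$, $y_r=\mathbb{1}\{\langle\theta_r,x\rangle\ge0\}$; the model is $p_\theta(y=1\mid x)=\sigma(\langle\theta,x\rangle)$ with $\sigma$ the logistic sigmoid; $\mathcal{L}_{\mathrm{pref}}(x,y_c,y_r;\theta):=-(\log p_\theta(y_c\mid x)-\log p_\theta(y_r\mid x))$; $v_\Delta:=\theta_c/\|\theta_c\|_2-\theta_r/\|\theta_r\|_2$. *)

theory Defs
  imports "HOL-Probability.Probability"
begin

definition sigmoid :: "real \<Rightarrow> real" where
  "sigmoid z = 1 / (1 + exp (- z))"

text \<open>Pseudo-label y = 1{<theta,x> >= 0}, with label 1 encoded as True.\<close>
definition pseudo_label :: "real^'d \<Rightarrow> real^'d \<Rightarrow> bool" where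
  "pseudo_label \<theta> x = (\<theta> \<bullet> x \<ge> 0)"

definition model_prob :: "real^'d \<Rightarrow> real^'d \<Rightarrow> bool \<Rightarrow> real" where
  "model_prob \<theta> x y = (if y then sigmoid (\<theta> \<bullet> x) else 1 - sigmoid (\<theta> \<bullet> x))"

definition L_pref :: "real^'d \<Rightarrow> bool \<Rightarrow> bool \<Rightarrow> real^'d \<Rightarrow> real" where
  "L_pref x yc yr \<theta> = - (ln (model_prob \<theta> x yc) - ln (model_prob \<theta> x yr))"

definition grad :: "(real^'d \<Rightarrow> real) \<Rightarrow> real^'d \<Rightarrow> real^'d" where
  "grad f \<theta> = (THE D. GDERIV f \<theta> :> D)"

definition batch_grad ::
  "real^'d \<Rightarrow> real^'d \<Rightarrow> nat \<Rightarrow> (nat \<Rightarrow> nat \<Rightarrow> real^'d) \<Rightarrow> nat \<Rightarrow> real^'d \<Rightarrow> real^'d" where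
  "batch_grad \<theta>c \<theta>r B X t \<theta> =
     (1 / real B) *\<^sub>R (\<Sum>i<B. grad (L_pref (X t i) (pseudo_label \<theta>c (X t i)) (pseudo_label \<theta>r (X t i))) \<theta>)"

primrec sgd ::
  "real^'d \<Rightarrow> real^'d \<Rightarrow> real \<Rightarrow> nat \<Rightarrow> real^'d \<Rightarrow> (nat \<Rightarrow> nat \<Rightarrow> real^'d) \<Rightarrow> nat \<Rightarrow> real^'d" where
  "sgd \<theta>c \<theta>r \<eta> B \<theta>0 X 0 = \<theta>0"
| "sgd \<theta>c \<theta>r \<eta> B \<theta>0 X (Suc t) =
     sgd \<theta>c \<theta>r \<eta> B \<theta>0 X t - \<eta> *\<^sub>R batch_grad \<theta>c \<theta>r B X t (sgd \<theta>c \<theta>r \<eta> B \<theta>0 X t)"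

definition v_Delta :: "real^'d \<Rightarrow> real^'d \<Rightarrow> real^'d" where
  "v_Delta \<theta>c \<theta>r = (1 / norm \<theta>c) *\<^sub>R \<theta>c - (1 / norm \<theta>r) *\<^sub>R \<theta>r"

primrec pop_iter :: "real^'d \<Rightarrow> real^'d \<Rightarrow> real \<Rightarrow> real^'d \<Rightarrow> nat \<Rightarrow> real^'d" where
  "pop_iter \<theta>c \<theta>r \<eta> \<theta>0 0 = \<theta>0"
| "pop_iter \<theta>c \<theta>r \<eta> \<theta>0 (Suc t) =
     pop_iter \<theta>c \<theta>r \<eta> \<theta>0 t + (\<eta> / sqrt (2 * pi)) *\<^sub>R v_Delta \<theta>c \<theta>r"

definition std_gauss_density :: "real^'d \<Rightarrow> real" where
  "std_gauss_density v = (2 * pi) powr (- real CARD('d) / 2) * exp (- (norm v)\<^sup>2 / 2)"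

end

theory Submission
  imports Defs
begin

lemma ln_sigmoid_diff: "ln (sigmoid z) - ln (1 - sigmoid z) = z"
proof -
  have p: "0 < 1 + exp (- z)" by (simp add: add_pos_pos)
  have "1 - sigmoid z = exp (- z) / (1 + exp (- z))"
    unfolding sigmoid_def using p by (simp add: field_simps)
  then have "ln (sigmoid z) - ln (1 - sigmoid z) = ln (1 / (1 + exp (-z))) - ln (exp (-z) / (1 + exp (-z)))"
    by (simp add: sigmoid_def)
  also have "\<dots> = z" using p by (simp add: ln_div)
  finally show ?thesis .
qed

lemma L_pref_eq: "L_pref x yc yr \<theta> = (of_bool yr - of_bool yc) * (\<theta> \<bullet> x)"
  using ln_sigmoid_diff[of "\<theta> \<bullet> x"]
  by (cases yc; cases yr) (auto simp: L_pref_def model_prob_def)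

lemma grad_lin: "grad (\<lambda>\<theta>. c * (\<theta> \<bullet> x)) \<theta> = c *\<^sub>R (x :: real^'d)"
proof -
  have d: "GDERIV (\<lambda>\<theta>. c * (\<theta> \<bullet> x)) \<theta> :> c *\<^sub>R x"
    unfolding gderiv_def
    by (rule has_derivative_eq_rhs, (rule derivative_eq_intros)+) (auto simp: algebra_simps)
  show ?thesis unfolding grad_def
  proof (rule the_equality)
    show "GDERIV (\<lambda>\<theta>. c * (\<theta> \<bullet> x)) \<theta> :> c *\<^sub>R x" by (rule d)
  next
    fix D assume "GDERIV (\<lambda>\<theta>. c * (\<theta> \<bullet> x)) \<theta> :> D"
    then have "(\<lambda>h. h \<bullet> D) = (\<lambda>h. h \<bullet> (c *\<^sub>R x))"
      using d unfolding gderiv_def by (rule has_derivative_unique)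
    then have "(D - c *\<^sub>R x) \<bullet> D = (D - c *\<^sub>R x) \<bullet> (c *\<^sub>R x)" by metis
    then have "(D - c *\<^sub>R x) \<bullet> (D - c *\<^sub>R x) = 0" by (simp add: inner_diff_right)
    then show "D = c *\<^sub>R x" by simp
  qed
qed

definition wv :: "real^'d \<Rightarrow> real^'d \<Rightarrow> real^'d \<Rightarrow> real^'d" where
  "wv \<theta>c \<theta>r x = (of_bool (\<theta>c \<bullet> x \<ge> 0) - of_bool (\<theta>r \<bullet> x \<ge> 0)) *\<^sub>R x"

lemma grad_L_pref: "grad (L_pref x yc yr) \<theta> = (of_bool yr - of_bool yc) *\<^sub>R x"
  unfolding L_pref_eq[abs_def] by (rule grad_lin)

lemma sgd_closed:
  "sgd \<theta>c \<theta>r \<eta> B \<theta>0 X T = \<theta>0 + (\<eta> / real B) *\<^sub>R (\<Sum>t<T. \<Sum>i<B. wv \<theta>c \<theta>r (X t i))"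
proof (induction T)
  case 0 then show ?case by simp
next
  case (Suc T)
  have "batch_grad \<theta>c \<theta>r B X T \<theta> = - (1 / real B) *\<^sub>R (\<Sum>i<B. wv \<theta>c \<theta>r (X T i))" for \<theta>
  proof -
    have "(\<Sum>i<B. (of_bool (0 \<le> \<theta>r \<bullet> X T i) - of_bool (0 \<le> \<theta>c \<bullet> X T i)) *\<^sub>R X T i)
       = - (\<Sum>i<B. (of_bool (0 \<le> \<theta>c \<bullet> X T i) - of_bool (0 \<le> \<theta>r \<bullet> X T i)) *\<^sub>R X T i)"
      by (subst sum_negf[symmetric], rule sum.cong) (auto simp: scaleR_diff_left)
    then show ?thesis unfolding batch_grad_def grad_L_pref wv_def pseudo_label_def by simp
  qed
  then show ?case using Suc by (simp add: algebra_simps scaleR_add_right)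
qed

lemma pop_closed:
  "pop_iter \<theta>c \<theta>r \<eta> \<theta>0 T = \<theta>0 + (real T * (\<eta> / sqrt (2 * pi))) *\<^sub>R v_Delta \<theta>c \<theta>r"
proof (induction T)
  case (Suc T)
  have "(real (Suc T) * (\<eta> / sqrt (2 * pi))) *\<^sub>R v_Delta \<theta>c \<theta>r
     = (real T * (\<eta> / sqrt (2 * pi))) *\<^sub>R v_Delta \<theta>c \<theta>r + (\<eta> / sqrt (2 * pi)) *\<^sub>R v_Delta \<theta>c \<theta>r"
    by (simp add: distrib_right scaleR_add_left[symmetric] add_divide_distrib)
  then show ?case using Suc by simp
qed simp


lemma Basis_vec_range: "(Basis :: (real^'d) set) = range (\<lambda>j. axis j 1)"
  unfolding Basis_vec_def by auto

lemma prod_Basis_vec: "(\<Prod>b\<in>(Basis::(real^'d) set). h b) = (\<Prod>j\<in>UNIV. h (axis j 1))"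
proof -
  have "inj (\<lambda>j::'d. axis j (1::real))" by (auto simp: inj_def axis_eq_axis)
  then show ?thesis unfolding Basis_vec_range by (simp add: prod.reindex)
qed

lemma gauss_prod: "std_gauss_density (x :: real^'d) = (\<Prod>j\<in>UNIV. std_normal_density (x $ j))"
proof -
  have n2: "(norm x)\<^sup>2 = (\<Sum>j\<in>UNIV. (x $ j)\<^sup>2)"
  proof -
    have "(norm x)\<^sup>2 = x \<bullet> x" by (rule power2_norm_eq_inner)
    also have "\<dots> = (\<Sum>j\<in>UNIV. (x $ j)\<^sup>2)" unfolding inner_vec_def by (simp add: power2_eq_square)
    finally show ?thesis .
  qed
  have c: "(2 * pi) powr (- real CARD('d) / 2) = (1 / sqrt (2 * pi)) ^ CARD('d)"
  proof -
    have "(2 * pi) powr (- real CARD('d) / 2) = ((2 * pi) powr (- (1 / 2))) powr real CARD('d)"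
      unfolding powr_powr by (simp add: field_simps)
    also have "\<dots> = ((2 * pi) powr (- (1 / 2))) ^ CARD('d)"
      by (rule powr_realpow) simp
    also have "(2 * pi) powr (- (1 / 2)) = 1 / sqrt (2 * pi)"
    proof -
      have "(2 * pi) powr (1 / 2) = sqrt (2 * pi)" by (rule powr_half_sqrt) simp
      moreover have "(2 * pi) powr (- (1 / 2)) = inverse ((2 * pi) powr (1 / 2))" by (rule powr_minus)
      ultimately show ?thesis by (simp only: inverse_eq_divide)
    qed
    finally show ?thesis .
  qed
  have "(\<Prod>j\<in>UNIV. std_normal_density (x $ j)) = (\<Prod>j\<in>(UNIV::'d set). 1 / sqrt (2 * pi)) * (\<Prod>j\<in>UNIV. exp (- (x $ j)\<^sup>2 / 2))"
    unfolding std_normal_density_def by (rule prod.distrib)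
  also have "(\<Prod>j\<in>UNIV. exp (- (x $ j)\<^sup>2 / 2)) = exp (\<Sum>j\<in>UNIV. - (x $ j)\<^sup>2 / 2)"
    by (simp add: exp_sum)
  also have "(\<Sum>j\<in>UNIV. - (x $ j)\<^sup>2 / 2) = - (norm x)\<^sup>2 / 2"
    by (simp add: n2 sum_negf sum_divide_distrib)
  finally show ?thesis unfolding std_gauss_density_def c by simp
qed

definition Gd :: "(real^'d) measure" where
  "Gd = density lborel (\<lambda>x. ennreal (std_gauss_density x))"

definition N1 :: "real measure" where
  "N1 = density lborel (\<lambda>t. ennreal (std_normal_density t))"

lemma sets_Gd[simp, measurable_cong]: "sets Gd = sets borel" by (simp add: Gd_def)
lemma space_Gd[simp]: "space Gd = UNIV" by (simp add: Gd_def)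
lemma sets_N1[simp, measurable_cong]: "sets N1 = sets borel" by (simp add: N1_def)
lemma space_N1[simp]: "space N1 = UNIV" by (simp add: N1_def)

lemma borel_measurable_gauss[measurable]: "std_gauss_density \<in> borel_measurable borel"
  unfolding std_gauss_density_def by measurable

lemma emeasure_Gd_box:
  assumes A: "\<And>j. A j \<in> sets borel"
  shows "emeasure Gd {x :: real^'d. \<forall>j. x $ j \<in> A j} = (\<Prod>j\<in>UNIV. emeasure N1 (A j))"
proof -
  define jof :: "real^'d \<Rightarrow> 'd" where "jof b = (SOME j. b = axis j 1)" for b
  have jof: "jof (axis j 1) = j" for j
    unfolding jof_def by (rule some_equality) (auto simp: axis_eq_axis)
  define F where "F b t = ennreal (std_normal_density t) * indicator (A (jof b)) t" for b t
  have meas: "{x :: real^'d. \<forall>j. x $ j \<in> A j} \<in> sets borel"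
  proof -
    have "{x :: real^'d. \<forall>j. x $ j \<in> A j} = (\<Inter>j. (\<lambda>x. x $ j) -` A j)" by auto
    also have "\<dots> \<in> sets borel"
      using A by (intro sets.countable_INT) (auto intro!: measurable_sets_borel[OF _ A])
    finally show ?thesis .
  qed
  have "emeasure Gd {x. \<forall>j. x $ j \<in> A j} = (\<integral>\<^sup>+x. ennreal (std_gauss_density x) * indicator {x :: real^'d. \<forall>j. x $ j \<in> A j} x \<partial>lborel)"
    unfolding Gd_def using meas by (simp add: emeasure_density)
  also have "\<dots> = (\<integral>\<^sup>+x. (\<Prod>b\<in>Basis. F b (x \<bullet> b)) \<partial>lborel)"
  proof (rule nn_integral_cong)
    fix x :: "real^'d"
    have "(\<Prod>b\<in>Basis. F b (x \<bullet> b)) = (\<Prod>j\<in>UNIV. ennreal (std_normal_density (x $ j)) * indicator (A j) (x $ j))"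
      unfolding prod_Basis_vec F_def by (simp add: jof inner_axis)
    also have "\<dots> = (\<Prod>j\<in>UNIV. ennreal (std_normal_density (x $ j))) * (\<Prod>j\<in>UNIV. indicator (A j) (x $ j))"
      by (rule prod.distrib)
    also have "(\<Prod>j\<in>UNIV. ennreal (std_normal_density (x $ j))) = ennreal (std_gauss_density x)"
      by (simp add: gauss_prod prod_ennreal)
    also have "(\<Prod>j\<in>UNIV. indicator (A j) (x $ j) :: ennreal) = indicator {x :: real^'d. \<forall>j. x $ j \<in> A j} x"
      by (simp add: indicator_def prod_zero_iff) 
    finally show "ennreal (std_gauss_density x) * indicator {x. \<forall>j. x $ j \<in> A j} x = (\<Prod>b\<in>Basis. F b (x \<bullet> b))" by simp
  qed
  also have "\<dots> = (\<Prod>b\<in>Basis. (\<integral>\<^sup>+t. F b t \<partial>lborel))"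
    using A[measurable] by (intro nn_integral_lborel_prod) (auto simp: F_def)
  also have "\<dots> = (\<Prod>j\<in>UNIV. (\<integral>\<^sup>+t. F (axis j 1) t \<partial>lborel))"
    by (rule prod_Basis_vec)
  also have "\<dots> = (\<Prod>j\<in>UNIV. emeasure N1 (A j))"
    unfolding F_def jof N1_def using A by (simp add: emeasure_density)
  finally show ?thesis .
qed


lemma prob_N1: "prob_space N1"
  unfolding N1_def by (rule prob_space_normal_density) simp

lemma prob_Gd: "prob_space (Gd :: (real^'d) measure)"
proof
  have "emeasure (Gd :: (real^'d) measure) {x :: real^'d. \<forall>j. x $ j \<in> UNIV} = (\<Prod>j\<in>(UNIV::'d set). emeasure N1 UNIV)"
    by (rule emeasure_Gd_box) simp
  also have "\<dots> = 1" using prob_space.emeasure_space_1[OF prob_N1] by simp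
  finally show "emeasure (Gd :: (real^'d) measure) (space Gd) = 1" by simp
qed

lemma distr_Gd_coord: "distr (Gd :: (real^'d) measure) borel (\<lambda>x. x $ j) = N1"
proof (rule measure_eqI)
  fix A :: "real set" assume A: "A \<in> sets (distr Gd borel (\<lambda>x. x $ j))"
  then have A': "A \<in> sets borel" by simp
  have "emeasure (distr (Gd :: (real^'d) measure) borel (\<lambda>x. x $ j)) A = emeasure Gd ((\<lambda>x. x $ j) -` A)"
    using A' by (subst emeasure_distr) auto
  also have "(\<lambda>x :: real^'d. x $ j) -` A = {x. \<forall>k. x $ k \<in> (if k = j then A else UNIV)}"
    by auto
  also have "emeasure Gd \<dots> = (\<Prod>k\<in>UNIV. emeasure N1 (if k = j then A else UNIV))"
    by (rule emeasure_Gd_box) (use A' in auto)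
  also have "\<dots> = emeasure N1 A"
  proof -
    have "(\<Prod>k\<in>UNIV. emeasure N1 (if k = j then A else UNIV)) = (\<Prod>k\<in>UNIV. if k = j then emeasure N1 A else 1)"
      using prob_space.emeasure_space_1[OF prob_N1] by (intro prod.cong) auto
    also have "\<dots> = emeasure N1 A" by (simp add: prod.delta)
    finally show ?thesis .
  qed
  finally show "emeasure (distr Gd borel (\<lambda>x. x $ j)) A = emeasure N1 A" .
qed simp

lemma indep_Gd: "prob_space.indep_vars (Gd :: (real^'d) measure) (\<lambda>_. borel) (\<lambda>j x. x $ j) UNIV"
proof -
  interpret G: prob_space "Gd :: (real^'d) measure" by (rule prob_Gd)
  interpret N: prob_space N1 by (rule prob_N1)
  interpret P: product_sigma_finite "\<lambda>_::'d. N1" by unfold_locales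
  have "distr Gd (\<Pi>\<^sub>M j\<in>UNIV. borel) (\<lambda>x. \<lambda>j\<in>UNIV. x $ j) = (\<Pi>\<^sub>M j\<in>(UNIV::'d set). N1)"
  proof (rule P.PiM_eqI)
    show "sets (distr Gd (\<Pi>\<^sub>M j\<in>UNIV. borel) (\<lambda>x. \<lambda>j\<in>UNIV. x $ j)) = sets (\<Pi>\<^sub>M j\<in>(UNIV::'d set). N1)"
      unfolding sets_distr by (rule sets_PiM_cong) simp_all
    fix A assume A: "\<And>i. i \<in> (UNIV::'d set) \<Longrightarrow> A i \<in> sets N1"
    have "emeasure (distr Gd (\<Pi>\<^sub>M j\<in>UNIV. borel) (\<lambda>x. \<lambda>j\<in>UNIV. x $ j)) (Pi\<^sub>E UNIV A)
        = emeasure Gd ((\<lambda>x. \<lambda>j\<in>UNIV. x $ j) -` (Pi\<^sub>E UNIV A) \<inter> space Gd)"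
      using A by (subst emeasure_distr) (auto intro!: measurable_restrict sets_PiM_I_finite)
    also have "(\<lambda>x. \<lambda>j\<in>UNIV. x $ j) -` (Pi\<^sub>E UNIV A) \<inter> space Gd = {x :: real^'d. \<forall>j. x $ j \<in> A j}"
      by auto
    also have "emeasure Gd \<dots> = (\<Prod>j\<in>UNIV. emeasure N1 (A j))"
      by (rule emeasure_Gd_box) (use A in auto)
    finally show "emeasure (distr Gd (\<Pi>\<^sub>M j\<in>UNIV. borel) (\<lambda>x. \<lambda>j\<in>UNIV. x $ j)) (Pi\<^sub>E UNIV A) = (\<Prod>j\<in>UNIV. emeasure N1 (A j))" .
  qed simp
  then show ?thesis
    by (subst G.indep_vars_iff_distr_eq_PiM) (auto simp: distr_Gd_coord)
qed

lemma distributed_Gd_coord: "distributed (Gd :: (real^'d) measure) lborel (\<lambda>x. x $ j) (\<lambda>t. ennreal (std_normal_density t))"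
  unfolding distributed_def
proof (intro conjI)
  have "distr (Gd :: (real^'d) measure) lborel (\<lambda>x. x $ j) = distr Gd borel (\<lambda>x. x $ j)"
    by (rule distr_cong) auto
  then show "distr (Gd :: (real^'d) measure) lborel (\<lambda>x. x $ j) = density lborel (\<lambda>t. ennreal (std_normal_density t))"
    using distr_Gd_coord[of j] by (simp add: N1_def)
qed auto


lemma Gd_integral_coord:
  assumes [measurable]: "f \<in> borel_measurable borel"
  shows "(\<integral>x. f (x $ j) \<partial>(Gd :: (real^'d) measure)) = (\<integral>t. std_normal_density t * f t \<partial>lborel)"
  using distributed_integral[OF distributed_Gd_coord[of j], of f] by simp

lemma Gd_integrable_coord:
  assumes [measurable]: "f \<in> borel_measurable borel"
  shows "integrable (Gd :: (real^'d) measure) (\<lambda>x. f (x $ j)) \<longleftrightarrow> integrable lborel (\<lambda>t. std_normal_density t * f t)"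
  using distributed_integrable[OF distributed_Gd_coord[of j], of f] by simp

lemma Gd_sq: "(\<integral>x. (x $ j)\<^sup>2 \<partial>(Gd :: (real^'d) measure)) = 1"
  and Gd_sq_int: "integrable (Gd :: (real^'d) measure) (\<lambda>x. (x $ j)\<^sup>2)"
  using Gd_integral_coord[of "\<lambda>t. t\<^sup>2" j] Gd_integrable_coord[of "\<lambda>t. t\<^sup>2" j]
    integral_std_normal_moment_even[of 1] integrable_std_normal_moment[of 2]
  by simp_all

lemma Gd_abs_int: "integrable (Gd :: (real^'d) measure) (\<lambda>x. \<bar>x $ j\<bar>)"
  using Gd_integrable_coord[of "\<lambda>t. \<bar>t\<bar>" j] integrable_std_normal_moment_abs[of 1]
  by simp

lemma exp_sixteenth: "exp (1/16 :: real) \<le> 3/2"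
  using exp_bound_lemma[of "1/16 :: real"] by simp

lemma cubic_exp_bound:
  "integrable lborel (\<lambda>t. std_normal_density t * (\<bar>t\<bar>^3 * exp (\<bar>t\<bar>/4)))"
  "(\<integral>t. std_normal_density t * (\<bar>t\<bar>^3 * exp (\<bar>t\<bar>/4)) \<partial>lborel) \<le> 12"
proof -
  define s :: real where "s = sqrt 2"
  have s: "0 < s" "s * s = 2" by (auto simp: s_def)
  have nd: "std_normal_density t * exp (t\<^sup>2 / 4) = s * normal_density 0 s t" for t
  proof -
    have "sqrt (2 * pi * s\<^sup>2) = s * sqrt (2 * pi)"
      using s by (simp add: real_sqrt_mult power2_eq_square s_def)
    moreover have "exp (- t\<^sup>2 / 2) * exp (t\<^sup>2 / 4) = exp (- t\<^sup>2 / (2 * s\<^sup>2))"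
    proof -
      have "s\<^sup>2 = 2" using s by (simp add: power2_eq_square)
      then have e: "- t\<^sup>2 / (2 * s\<^sup>2) = - t\<^sup>2 / 2 + t\<^sup>2 / 4" by simp
      show ?thesis by (subst e) (simp add: mult_exp_exp)
    qed
    ultimately show ?thesis using s
      by (simp add: std_normal_density_def normal_density_def field_simps)
  qed
  have hb: "has_bochner_integral lborel (\<lambda>t. normal_density 0 s t * \<bar>t - 0\<bar>^(2 * 1 + 1)) (2^1 * s^(2 * 1 + 1) * fact 1 * sqrt (2 / pi))"
    by (rule normal_moment_abs_odd) (use s in simp)
  define g where "g t = exp (1/16) * s * (normal_density 0 s t * \<bar>t\<bar>^3)" for t
  have hb': "has_bochner_integral lborel (\<lambda>t. normal_density 0 s t * \<bar>t\<bar>^3) (2 * s^3 * sqrt (2 / pi))"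
    using hb by simp
  have "integrable lborel (\<lambda>t. normal_density 0 s t * \<bar>t\<bar>^3)" using hb' by rule
  then have gint: "integrable lborel g" unfolding g_def by (intro integrable_mult_right)
  have gval: "integral\<^sup>L lborel g = exp (1/16) * s * (2 * s^3 * sqrt (2 / pi))"
    unfolding g_def using has_bochner_integral_integral_eq[OF hb'] by simp
  have le: "std_normal_density t * (\<bar>t\<bar>^3 * exp (\<bar>t\<bar>/4)) \<le> g t" for t
  proof -
    have "\<bar>t\<bar>/4 \<le> 1/16 + t\<^sup>2/4"
    proof -
      have "0 \<le> (\<bar>t\<bar>/2 - 1/4)\<^sup>2" by simp
      then show ?thesis by (simp add: power2_eq_square algebra_simps abs_mult_self_eq)
    qed
    then have "exp (\<bar>t\<bar>/4) \<le> exp (1/16) * exp (t\<^sup>2/4)" by (simp add: mult_exp_exp)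
    then have "std_normal_density t * (\<bar>t\<bar>^3 * exp (\<bar>t\<bar>/4)) \<le> std_normal_density t * (\<bar>t\<bar>^3 * (exp (1/16) * exp (t\<^sup>2/4)))"
      by (intro mult_left_mono) auto
    also have "\<dots> = exp (1/16) * (std_normal_density t * exp (t\<^sup>2/4)) * \<bar>t\<bar>^3" by (simp add: ac_simps)
    also have "\<dots> = g t" unfolding nd g_def by (simp add: ac_simps)
    finally show ?thesis .
  qed
  show int: "integrable lborel (\<lambda>t. std_normal_density t * (\<bar>t\<bar>^3 * exp (\<bar>t\<bar>/4)))"
    by (rule Bochner_Integration.integrable_bound[OF gint]) (use le in \<open>auto intro!: AE_I2 order_trans[OF _ le] order_trans[OF le abs_ge_self]\<close>)
  have "(\<integral>t. std_normal_density t * (\<bar>t\<bar>^3 * exp (\<bar>t\<bar>/4)) \<partial>lborel) \<le> integral\<^sup>L lborel g"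
    by (rule integral_mono[OF int gint le])
  also have "\<dots> = exp (1/16) * (2 * (s * s) * (s * s)) * sqrt (2 / pi)"
    unfolding gval by (simp add: power3_eq_cube ac_simps)
  also have "\<dots> = 8 * exp (1/16) * sqrt (2 / pi)" using s by simp
  also have "\<dots> \<le> 8 * (3/2) * 1"
  proof (intro mult_mono)
    have "2 / pi \<le> 1" using pi_gt3 by simp
    then show "sqrt (2 / pi) \<le> 1" by simp
  qed (use exp_sixteenth in auto)
  finally show "(\<integral>t. std_normal_density t * (\<bar>t\<bar>^3 * exp (\<bar>t\<bar>/4)) \<partial>lborel) \<le> 12" by simp
qed


lemma dot_normal:
  assumes v: "(v :: real^'d) \<noteq> 0"
  shows "distributed (Gd :: (real^'d) measure) lborel (\<lambda>x. v \<bullet> x) (\<lambda>t. ennreal (normal_density 0 (norm v) t))"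
proof -
  interpret G: prob_space "Gd :: (real^'d) measure" by (rule prob_Gd)
  define J where "J = {j. v $ j \<noteq> 0}"
  have J: "finite J" "J \<noteq> {}" using v unfolding J_def by (auto simp: vec_eq_iff)
  have ind: "G.indep_vars (\<lambda>_. borel) (\<lambda>j x. v $ j * x $ j) J"
    by (rule G.indep_vars_compose2[OF G.indep_vars_subset[OF indep_Gd], where Y="\<lambda>j t. v $ j * t"]) auto
  have dist: "distributed Gd lborel (\<lambda>x. v $ j * x $ j) (\<lambda>t. ennreal (normal_density 0 \<bar>v $ j\<bar> t))"
    if "j \<in> J" for j
  proof -
    have "v $ j \<noteq> 0" using that by (simp add: J_def)
    from G.normal_density_affine[OF distributed_Gd_coord[of j], of "v $ j" 0, OF _ this]
    show ?thesis by simp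
  qed
  have pos: "0 < \<bar>v $ j\<bar>" if "j \<in> J" for j using that by (simp add: J_def)
  from G.sum_indep_normal[OF J ind pos dist]
  have D: "distributed Gd lborel (\<lambda>x. \<Sum>j\<in>J. v $ j * x $ j) (\<lambda>t. ennreal (normal_density 0 (sqrt (\<Sum>j\<in>J. \<bar>v $ j\<bar>\<^sup>2)) t))"
    by simp
  have e1: "(\<lambda>x. \<Sum>j\<in>J. v $ j * x $ j) = (\<lambda>x. v \<bullet> x)"
  proof
    fix x :: "real^'d"
    show "(\<Sum>j\<in>J. v $ j * x $ j) = v \<bullet> x"
      unfolding inner_vec_def inner_real_def
      by (rule sum.mono_neutral_left) (auto simp: J_def)
  qed
  have e2: "sqrt (\<Sum>j\<in>J. \<bar>v $ j\<bar>\<^sup>2) = norm v"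
  proof -
    have "(\<Sum>j\<in>J. \<bar>v $ j\<bar>\<^sup>2) = (\<Sum>j\<in>UNIV. \<bar>v $ j\<bar>\<^sup>2)"
      by (rule sum.mono_neutral_left) (auto simp: J_def)
    then show ?thesis by (simp add: norm_vec_def L2_set_def)
  qed
  show ?thesis using D unfolding e1 e2 .
qed

lemma pos_part_normal:
  assumes "0 < \<sigma>"
  shows "integrable lborel (\<lambda>t. normal_density 0 \<sigma> t * max t 0)"
    "(\<integral>t. normal_density 0 \<sigma> t * max t 0 \<partial>lborel) = \<sigma> / sqrt (2 * pi)"
proof -
  have h1: "has_bochner_integral lborel (\<lambda>t. normal_density 0 \<sigma> t * \<bar>t - 0\<bar>^(2 * 0 + 1)) (2^0 * \<sigma>^(2 * 0 + 1) * fact 0 * sqrt (2 / pi))"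
    by (rule normal_moment_abs_odd) (use assms in simp)
  have h2: "has_bochner_integral lborel (\<lambda>t. normal_density 0 \<sigma> t * t) 0"
    by (rule normal_moment_nz_1) (use assms in simp)
  have "has_bochner_integral lborel (\<lambda>t. (normal_density 0 \<sigma> t * \<bar>t\<bar> + normal_density 0 \<sigma> t * t) / 2) ((\<sigma> * sqrt (2 / pi) + 0) / 2)"
    using has_bochner_integral_add[OF h1 h2] by (intro has_bochner_integral_divide_zero) simp
  moreover have "(\<lambda>t. (normal_density 0 \<sigma> t * \<bar>t\<bar> + normal_density 0 \<sigma> t * t) / 2) = (\<lambda>t. normal_density 0 \<sigma> t * max t 0)"
    by (auto simp: max_def field_simps)
  moreover have "(\<sigma> * sqrt (2 / pi) + 0) / 2 = \<sigma> / sqrt (2 * pi)"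
  proof -
    have "sqrt (2 / pi) * sqrt (2 * pi) = 2" by (simp add: real_sqrt_mult[symmetric])
    then show ?thesis by (simp add: field_simps)
  qed
  ultimately have hb: "has_bochner_integral lborel (\<lambda>t. normal_density 0 \<sigma> t * max t 0) (\<sigma> / sqrt (2 * pi))"
    by simp
  then show "integrable lborel (\<lambda>t. normal_density 0 \<sigma> t * max t 0)" by rule
  show "(\<integral>t. normal_density 0 \<sigma> t * max t 0 \<partial>lborel) = \<sigma> / sqrt (2 * pi)"
    using hb by (rule has_bochner_integral_integral_eq)
qed


lemma vec_lemma:
  fixes g u :: "'a::real_inner"
  assumes le: "\<And>v. v \<bullet> g \<le> c * norm v" and eq: "u \<bullet> g = c * norm u" and u: "u \<noteq> 0" and c0: "0 \<le> c"
  shows "g = (c / norm u) *\<^sub>R u"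
proof -
  have "g \<bullet> g \<le> c * norm g" using le[of g] by simp
  then have n2: "norm g * norm g \<le> c * norm g" by (simp add: power2_norm_eq_inner[symmetric] power2_eq_square)
  have ng: "norm g \<le> c"
  proof (cases "norm g = 0")
    case False
    then have "0 < norm g" by simp
    with n2 show ?thesis by simp
  next
    case True then show ?thesis using c0 by simp
  qed
  have nu: "0 < norm u" using u by simp
  define a where "a = c / norm u"
  have "(norm (g - a *\<^sub>R u))\<^sup>2 = (g - a *\<^sub>R u) \<bullet> (g - a *\<^sub>R u)" by (rule power2_norm_eq_inner)
  also have "\<dots> = g \<bullet> g - 2 * a * (u \<bullet> g) + a * a * (u \<bullet> u)"
    by (simp add: inner_diff_left inner_diff_right inner_commute algebra_simps)
  also have "\<dots> = norm g * norm g - 2 * a * (c * norm u) + a * a * (norm u * norm u)"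
    by (simp only: eq power2_norm_eq_inner[symmetric] power2_eq_square)
  also have "\<dots> = norm g * norm g - c * c"
    using nu by (simp add: a_def field_simps)
  also have "\<dots> \<le> 0" using ng c0 by (simp add: mult_mono)
  finally have "norm (g - a *\<^sub>R u) = 0" by simp
  then show ?thesis by (simp add: a_def)
qed

definition hsj :: "real^'d \<Rightarrow> 'd \<Rightarrow> real" where
  "hsj u j = (\<integral>x. (if u \<bullet> x \<ge> 0 then x $ j else 0) \<partial>(Gd :: (real^'d) measure))"

definition hs :: "real^'d \<Rightarrow> real^'d" where
  "hs u = (\<chi> j. hsj u j)"

lemma hs_int: "integrable (Gd :: (real^'d) measure) (\<lambda>x. if u \<bullet> x \<ge> 0 then x $ j else 0)"
  by (rule Bochner_Integration.integrable_bound[OF Gd_abs_int[of j]]) (auto intro!: AE_I2)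

lemma hs_int_inner: "integrable (Gd :: (real^'d) measure) (\<lambda>x. if u \<bullet> x \<ge> 0 then v \<bullet> x else 0)"
proof -
  have "(\<lambda>x. if u \<bullet> x \<ge> 0 then v \<bullet> x else 0) = (\<lambda>x. \<Sum>j\<in>UNIV. v $ j * (if u \<bullet> x \<ge> 0 then x $ j else 0))"
    by (auto simp: inner_vec_def)
  moreover have "integrable (Gd :: (real^'d) measure) (\<lambda>x. \<Sum>j\<in>UNIV. v $ j * (if u \<bullet> x \<ge> 0 then x $ j else 0))"
    by (intro Bochner_Integration.integrable_sum integrable_mult_right hs_int)
  ultimately show ?thesis by simp
qed

lemma inner_hs: "v \<bullet> hs u = (\<integral>x. (if u \<bullet> x \<ge> 0 then v \<bullet> x else 0) \<partial>(Gd :: (real^'d) measure))"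
proof -
  have "v \<bullet> hs u = (\<Sum>j\<in>UNIV. v $ j * hsj u j)" by (simp add: hs_def inner_vec_def)
  also have "\<dots> = (\<Sum>j\<in>UNIV. (\<integral>x. v $ j * (if u \<bullet> x \<ge> 0 then x $ j else 0) \<partial>(Gd :: (real^'d) measure)))"
    by (simp add: hsj_def)
  also have "\<dots> = (\<integral>x. (\<Sum>j\<in>UNIV. v $ j * (if u \<bullet> x \<ge> 0 then x $ j else 0)) \<partial>(Gd :: (real^'d) measure))"
    by (rule Bochner_Integration.integral_sum[symmetric]) (intro integrable_mult_right hs_int)+
  also have "\<dots> = (\<integral>x. (if u \<bullet> x \<ge> 0 then v \<bullet> x else 0) \<partial>(Gd :: (real^'d) measure))"
    by (rule Bochner_Integration.integral_cong) (auto simp: inner_vec_def)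
  finally show ?thesis .
qed

lemma F_eq: "(\<integral>x. (if v \<bullet> x \<ge> 0 then v \<bullet> x else 0) \<partial>(Gd :: (real^'d) measure)) = norm v / sqrt (2 * pi)"
proof (cases "v = 0")
  case True then show ?thesis by simp
next
  case False
  have "(\<integral>x. (if v \<bullet> x \<ge> 0 then v \<bullet> x else 0) \<partial>(Gd :: (real^'d) measure)) = (\<integral>x. max (v \<bullet> x) 0 \<partial>(Gd :: (real^'d) measure))"
    by (rule Bochner_Integration.integral_cong) (auto simp: max_def)
  also have "\<dots> = (\<integral>t. normal_density 0 (norm v) t * max t 0 \<partial>lborel)"
    by (rule distributed_integral[OF dot_normal[OF False], symmetric]) auto
  also have "\<dots> = norm v / sqrt (2 * pi)"
    by (rule pos_part_normal) (use False in simp)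
  finally show ?thesis .
qed

lemma hs_eq:
  assumes u: "(u :: real^'d) \<noteq> 0"
  shows "hs u = (1 / (norm u * sqrt (2 * pi))) *\<^sub>R u"
proof -
  have "hs u = ((1 / sqrt (2 * pi)) / norm u) *\<^sub>R u"
  proof (rule vec_lemma[OF _ _ u])
    show "0 \<le> 1 / sqrt (2 * pi)" by simp
  next
    fix v :: "real^'d"
    have "v \<bullet> hs u \<le> (\<integral>x. (if v \<bullet> x \<ge> 0 then v \<bullet> x else 0) \<partial>(Gd :: (real^'d) measure))"
      unfolding inner_hs by (rule integral_mono[OF hs_int_inner hs_int_inner]) auto
    then show "v \<bullet> hs u \<le> 1 / sqrt (2 * pi) * norm v" unfolding F_eq by simp
  next
    show "u \<bullet> hs u = 1 / sqrt (2 * pi) * norm u" unfolding inner_hs F_eq by simp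
  qed
  then show ?thesis by (simp add: field_simps)
qed


lemma wv_alt: "wv \<theta>c \<theta>r x = (if \<theta>c \<bullet> x \<ge> 0 then x else 0) - (if \<theta>r \<bullet> x \<ge> 0 then x else 0)"
  by (simp add: wv_def scaleR_diff_left)

lemma wv_coord: "wv \<theta>c \<theta>r x $ j = (if \<theta>c \<bullet> x \<ge> 0 then x $ j else 0) - (if \<theta>r \<bullet> x \<ge> 0 then x $ j else 0)"
  by (simp add: wv_alt)

lemma wv_measurable[measurable]: "wv \<theta>c \<theta>r \<in> borel_measurable borel"
  unfolding wv_alt[abs_def] by measurable

lemma wv_coord_abs: "\<bar>wv \<theta>c \<theta>r x $ j\<bar> \<le> \<bar>x $ j\<bar>"
  unfolding wv_coord by auto

definition muv :: "real^'d \<Rightarrow> real^'d \<Rightarrow> real^'d" where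
  "muv \<theta>c \<theta>r = (1 / sqrt (2 * pi)) *\<^sub>R v_Delta \<theta>c \<theta>r"

lemma wv_int: "integrable (Gd :: (real^'d) measure) (\<lambda>x. wv \<theta>c \<theta>r x $ j)"
  unfolding wv_coord by (intro Bochner_Integration.integrable_diff hs_int)

lemma wv_mean:
  assumes "\<theta>c \<noteq> 0" "\<theta>r \<noteq> 0"
  shows "(\<integral>x. wv \<theta>c \<theta>r x $ j \<partial>(Gd :: (real^'d) measure)) = muv \<theta>c \<theta>r $ j"
proof -
  have "(\<integral>x. wv \<theta>c \<theta>r x $ j \<partial>(Gd :: (real^'d) measure)) = hsj \<theta>c j - hsj \<theta>r j"
    unfolding wv_coord hsj_def by (intro Bochner_Integration.integral_diff hs_int)
  also have "\<dots> = hs \<theta>c $ j - hs \<theta>r $ j" by (simp add: hs_def)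
  also have "\<dots> = muv \<theta>c \<theta>r $ j"
    using assms by (simp add: hs_eq muv_def v_Delta_def field_simps)
  finally show ?thesis .
qed

lemma exp_taylor3: "exp (y::real) \<le> 1 + y + y\<^sup>2 / 2 + \<bar>y\<bar>^3 * exp \<bar>y\<bar> / 6"
proof -
  obtain t where t: "\<bar>t\<bar> \<le> \<bar>y\<bar>" and e: "exp y = (\<Sum>m<3. y ^ m / fact m) + exp t / fact 3 * y ^ 3"
    using Maclaurin_exp_le[of y 3] by blast
  have s: "(\<Sum>m<3. y ^ m / fact m) = 1 + y + y\<^sup>2 / 2"
    by (simp add: eval_nat_numeral fact_numeral power2_eq_square)
  have "exp t / fact 3 * y ^ 3 \<le> \<bar>exp t / fact 3 * y ^ 3\<bar>" by (rule abs_ge_self)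
  also have "\<dots> = exp t * \<bar>y\<bar>^3 / 6" by (simp add: abs_mult power_abs fact_numeral)
  also have "\<dots> \<le> exp \<bar>y\<bar> * \<bar>y\<bar>^3 / 6"
    using t by (intro divide_right_mono mult_right_mono) auto
  finally show ?thesis using e s by (simp add: ac_simps)
qed


lemma wv_coord_measurable[measurable]: "(\<lambda>x. wv \<theta>c \<theta>r x $ j) \<in> borel_measurable borel"
  unfolding wv_coord by measurable

lemma mgf_Gd:
  fixes \<theta>c \<theta>r :: "real^'d"
  assumes nz: "\<theta>c \<noteq> 0" "\<theta>r \<noteq> 0" and l: "0 < l" "l \<le> 1/4" and s: "s = 1 \<or> s = -1"
  shows "(\<integral>\<^sup>+x. ennreal (exp (l * (s * (wv \<theta>c \<theta>r x $ j - muv \<theta>c \<theta>r $ j)))) \<partial>(Gd :: (real^'d) measure))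
          \<le> ennreal (exp (l\<^sup>2 / 2 + 2 * l^3))"
proof -
  interpret G: prob_space "Gd :: (real^'d) measure" by (rule prob_Gd)
  define m where "m = muv \<theta>c \<theta>r $ j"
  define W where "W x = s * wv \<theta>c \<theta>r x $ j" for x
  define K where "K = (\<integral>x. \<bar>x $ j\<bar>^3 * exp (\<bar>x $ j\<bar>/4) \<partial>(Gd :: (real^'d) measure))"
  define h where "h x = 1 + l * W x + l\<^sup>2 * (x $ j)\<^sup>2 / 2 + l^3 / 6 * (\<bar>x $ j\<bar>^3 * exp (\<bar>x $ j\<bar>/4))" for x
  have Wm[measurable]: "W \<in> borel_measurable borel" unfolding W_def by measurable
  have Wabs: "\<bar>W x\<bar> \<le> \<bar>x $ j\<bar>" for x
    using s wv_coord_abs[of \<theta>c \<theta>r x j] by (auto simp: W_def)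
  have pt: "exp (l * W x) \<le> h x" for x
  proof -
    have a: "\<bar>l * W x\<bar> \<le> l * \<bar>x $ j\<bar>" using l Wabs[of x] by (simp add: abs_mult mult_left_mono)
    have "(l * W x)\<^sup>2 \<le> (l * \<bar>x $ j\<bar>)\<^sup>2"
      using a by (metis abs_ge_zero abs_le_square_iff abs_mult_pos abs_of_nonneg l(1) less_imp_le)
    then have sq: "(l * W x)\<^sup>2 \<le> l\<^sup>2 * (x $ j)\<^sup>2" by (simp add: power_mult_distrib)
    have c3: "\<bar>l * W x\<bar>^3 \<le> l^3 * \<bar>x $ j\<bar>^3"
      using power_mono[OF a, of 3] by (simp add: power_mult_distrib)
    have ee: "exp \<bar>l * W x\<bar> \<le> exp (\<bar>x $ j\<bar>/4)"
    proof -
      have "l * \<bar>x $ j\<bar> \<le> (1/4) * \<bar>x $ j\<bar>" using l by (intro mult_right_mono) auto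
      then show ?thesis using a by simp
    qed
    have "\<bar>l * W x\<bar>^3 * exp \<bar>l * W x\<bar> \<le> (l^3 * \<bar>x $ j\<bar>^3) * exp (\<bar>x $ j\<bar>/4)"
      by (rule mult_mono[OF c3 ee]) (use l in auto)
    then show ?thesis using exp_taylor3[of "l * W x"] sq unfolding h_def by (simp add: field_simps)
  qed
  have iW: "integrable Gd W" unfolding W_def by (intro integrable_mult_right wv_int)
  have iC: "integrable (Gd :: (real^'d) measure) (\<lambda>x. \<bar>x $ j\<bar>^3 * exp (\<bar>x $ j\<bar>/4))"
    using Gd_integrable_coord[of "\<lambda>t. \<bar>t\<bar>^3 * exp (\<bar>t\<bar>/4)" j] cubic_exp_bound(1) by simp
  have K: "K \<le> 12"
    using Gd_integral_coord[of "\<lambda>t. \<bar>t\<bar>^3 * exp (\<bar>t\<bar>/4)" j] cubic_exp_bound(2) by (simp add: K_def)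
  have iS: "integrable (Gd :: (real^'d) measure) (\<lambda>x. (x $ j)\<^sup>2)" by (rule Gd_sq_int)
  have ih: "integrable Gd h"
    unfolding h_def
    by (intro Bochner_Integration.integrable_add integrable_mult_right iW iC iS integrable_divide_zero) auto
  have intW: "(\<integral>x. W x \<partial>Gd) = s * m"
    unfolding W_def m_def using wv_mean[OF nz, of j] by simp
  have "(\<integral>x. h x \<partial>Gd) = 1 + l * (s * m) + l\<^sup>2 * 1 / 2 + l^3 / 6 * K"
  proof -
    have "(\<integral>x. h x \<partial>Gd) = (\<integral>x. 1 \<partial>(Gd :: (real^'d) measure)) + l * (\<integral>x. W x \<partial>Gd) + l\<^sup>2 * (\<integral>x. (x $ j)\<^sup>2 \<partial>(Gd :: (real^'d) measure)) / 2 + l^3 / 6 * K"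
      unfolding h_def K_def
      by (subst Bochner_Integration.integral_add Bochner_Integration.integral_mult_right_zero integral_divide_zero
            | intro Bochner_Integration.integrable_add integrable_mult_right iW iC iS integrable_divide_zero
            | simp)+
    then show ?thesis using intW Gd_sq[of j] G.prob_space by simp
  qed
  also have "\<dots> \<le> 1 + (l * s * m + l\<^sup>2 / 2 + 2 * l^3)"
    using K l by (simp add: algebra_simps)
  also have "\<dots> \<le> exp (l * s * m + l\<^sup>2 / 2 + 2 * l^3)" by (rule exp_ge_add_one_self)
  finally have hle: "(\<integral>x. h x \<partial>Gd) \<le> exp (l * s * m + l\<^sup>2 / 2 + 2 * l^3)" .
  have hpos: "0 \<le> h x" for x using pt[of x] by (meson exp_ge_zero order_trans)
  have "(\<integral>\<^sup>+x. ennreal (exp (l * (s * (wv \<theta>c \<theta>r x $ j - muv \<theta>c \<theta>r $ j)))) \<partial>(Gd :: (real^'d) measure))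
      = (\<integral>\<^sup>+x. ennreal (exp (- (l * s * m))) * ennreal (exp (l * W x)) \<partial>Gd)"
    by (rule nn_integral_cong) (simp add: W_def m_def ennreal_mult[symmetric] mult_exp_exp algebra_simps)
  also have "\<dots> = ennreal (exp (- (l * s * m))) * (\<integral>\<^sup>+x. ennreal (exp (l * W x)) \<partial>Gd)"
    by (rule nn_integral_cmult) measurable
  also have "\<dots> \<le> ennreal (exp (- (l * s * m))) * (\<integral>\<^sup>+x. ennreal (h x) \<partial>Gd)"
    by (intro mult_left_mono nn_integral_mono ennreal_leI pt) auto
  also have "(\<integral>\<^sup>+x. ennreal (h x) \<partial>Gd) = ennreal (\<integral>x. h x \<partial>Gd)"
    by (rule nn_integral_eq_integral[OF ih]) (simp add: hpos)
  also have "ennreal (exp (- (l * s * m))) * ennreal (\<integral>x. h x \<partial>Gd) \<le> ennreal (exp (- (l * s * m))) * ennreal (exp (l * s * m + l\<^sup>2 / 2 + 2 * l^3))"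
    by (intro mult_left_mono ennreal_leI hle) simp
  also have "\<dots> = ennreal (exp (l\<^sup>2 / 2 + 2 * l^3))"
    by (simp add: ennreal_mult[symmetric] mult_exp_exp)
  finally show ?thesis .
qed


lemma chernoff_sum:
  fixes M :: "'a measure" and Z :: "'k \<Rightarrow> 'a \<Rightarrow> real^'d" and \<theta>c \<theta>r :: "real^'d"
  assumes P: "prob_space M" and K: "finite K"
    and ind: "prob_space.indep_vars M (\<lambda>_. borel) Z K"
    and dist: "\<And>k. k \<in> K \<Longrightarrow> distributed M lborel (Z k) (\<lambda>x. ennreal (std_gauss_density x))"
    and nz: "\<theta>c \<noteq> 0" "\<theta>r \<noteq> 0" and l: "0 < l" "l \<le> 1/4" and s: "s = 1 \<or> s = -1"
  shows "emeasure M {\<omega> \<in> space M. a \<le> s * (\<Sum>k\<in>K. (wv \<theta>c \<theta>r (Z k \<omega>) $ j - muv \<theta>c \<theta>r $ j))}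
           \<le> ennreal (exp (- l * a + real (card K) * (l\<^sup>2 / 2 + 2 * l^3)))"
proof -
  interpret prob_space M by (rule P)
  define m where "m = muv \<theta>c \<theta>r $ j"
  define f where "f z = ennreal (exp (l * (s * (wv \<theta>c \<theta>r z $ j - m))))" for z :: "real^'d"
  define q where "q = l\<^sup>2 / 2 + 2 * l^3"
  have fm[measurable]: "f \<in> borel_measurable borel" unfolding f_def by measurable
  have Zm[measurable]: "Z k \<in> borel_measurable M" if "k \<in> K" for k
    using dist[OF that] by (auto simp: distributed_def)
  have distr_eq: "distr M lborel (Z k) = Gd" if "k \<in> K" for k
    using dist[OF that] by (simp add: distributed_def Gd_def)
  have each: "(\<integral>\<^sup>+\<omega>. f (Z k \<omega>) \<partial>M) \<le> ennreal (exp q)" if "k \<in> K" for k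
  proof -
    have "(\<integral>\<^sup>+\<omega>. f (Z k \<omega>) \<partial>M) = (\<integral>\<^sup>+z. f z \<partial>distr M lborel (Z k))"
      using that by (subst nn_integral_distr) (auto simp: measurable_lborel1 Zm)
    also have "\<dots> = (\<integral>\<^sup>+z. f z \<partial>Gd)" using distr_eq[OF that] by simp
    also have "\<dots> \<le> ennreal (exp q)" unfolding f_def m_def q_def by (rule mgf_Gd[OF nz l s])
    finally show ?thesis .
  qed
  have indf: "indep_vars (\<lambda>_. borel) (\<lambda>k \<omega>. f (Z k \<omega>)) K"
    by (rule indep_vars_compose2[OF ind]) simp
  define S where "S \<omega> = (\<Sum>k\<in>K. (wv \<theta>c \<theta>r (Z k \<omega>) $ j - m))" for \<omega>
  have Sm[measurable]: "S \<in> borel_measurable M" unfolding S_def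
    by (intro borel_measurable_sum) (use Zm in measurable)
  have "emeasure M {\<omega> \<in> space M. a \<le> s * S \<omega>} = (\<integral>\<^sup>+\<omega>. indicator {\<omega> \<in> space M. a \<le> s * S \<omega>} \<omega> \<partial>M)"
    by (rule nn_integral_indicator[symmetric]) measurable
  also have "\<dots> \<le> (\<integral>\<^sup>+\<omega>. ennreal (exp (- l * a)) * (\<Prod>k\<in>K. f (Z k \<omega>)) \<partial>M)"
  proof (rule nn_integral_mono)
    fix \<omega> assume "\<omega> \<in> space M"
    have pe: "(\<Prod>k\<in>K. f (Z k \<omega>)) = ennreal (exp (l * (s * S \<omega>)))"
      unfolding f_def S_def
      by (simp add: prod_ennreal exp_sum[OF K] sum_distrib_left)
    show "indicator {\<omega> \<in> space M. a \<le> s * S \<omega>} \<omega> \<le> ennreal (exp (- l * a)) * (\<Prod>k\<in>K. f (Z k \<omega>))"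
    proof (cases "a \<le> s * S \<omega>")
      case True
      then have "1 \<le> exp (- l * a) * exp (l * (s * S \<omega>))"
        using l by (simp add: mult_exp_exp algebra_simps mult_left_mono)
      then show ?thesis using True \<open>\<omega> \<in> space M\<close>
        by (simp add: pe ennreal_mult[symmetric] ennreal_1[symmetric] del: ennreal_1)
    qed simp
  qed
  also have "\<dots> = ennreal (exp (- l * a)) * (\<integral>\<^sup>+\<omega>. (\<Prod>k\<in>K. f (Z k \<omega>)) \<partial>M)"
    by (rule nn_integral_cmult) (use Zm in measurable)
  also have "(\<integral>\<^sup>+\<omega>. (\<Prod>k\<in>K. f (Z k \<omega>)) \<partial>M) = (\<Prod>k\<in>K. (\<integral>\<^sup>+\<omega>. f (Z k \<omega>) \<partial>M))"
    by (rule indep_vars_nn_integral[OF K indf]) simp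
  also have "\<dots> \<le> (\<Prod>k\<in>K. ennreal (exp q))"
    by (rule prod_mono_ennreal) (auto intro: each)
  also have "\<dots> = ennreal (exp (real (card K) * q))"
    by (simp add: exp_of_nat_mult ennreal_power)
  finally have "emeasure M {\<omega> \<in> space M. a \<le> s * S \<omega>} \<le> ennreal (exp (- l * a)) * ennreal (exp (real (card K) * q))"
    by (simp add: mult_left_mono)
  also have "\<dots> = ennreal (exp (- l * a + real (card K) * q))"
    by (simp add: ennreal_mult[symmetric] mult_exp_exp)
  finally show ?thesis unfolding S_def m_def q_def .
qed


lemma alg_chernoff:
  fixes x N R L :: real
  assumes x: "0 < x" and N: "0 < N" and L: "0 < L" and xR: "x * R = 2 * L" and Nx: "N * x\<^sup>2 = 2 * L"
  defines "l \<equiv> x / (1 + 4 * x)"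
  shows "- l * (R + 4 * L) + N * (l\<^sup>2 / 2 + 2 * l^3) \<le> - L"
proof -
  define D where "D = 1 + 4 * x"
  have D: "0 < D" using x by (simp add: D_def)
  have e1: "- l * (R + 4 * L) = - (2 * L + 4 * x * L) / D"
    unfolding l_def D_def[symmetric] using D xR by (simp add: field_simps)
  have e2: "N * (l\<^sup>2 / 2 + 2 * l^3) = (N * x\<^sup>2) * (1 / (2 * D\<^sup>2) + 2 * x / D^3)"
    unfolding l_def D_def[symmetric] using D by (simp add: field_simps power2_eq_square power3_eq_cube)
  have "- l * (R + 4 * L) + N * (l\<^sup>2 / 2 + 2 * l^3) = - (2 * L + 4 * x * L) / D + 2 * L * (1 / (2 * D\<^sup>2) + 2 * x / D^3)"
    unfolding e1 e2 Nx ..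
  also have "\<dots> = L * ((- 2 * (1 + 2 * x) * D\<^sup>2 + D + 4 * x) / D^3)"
    using D by (simp add: field_simps power2_eq_square power3_eq_cube)
  also have "- 2 * (1 + 2 * x) * D\<^sup>2 + D + 4 * x = - (D^3) - 16 * x\<^sup>2"
    unfolding D_def by (simp add: algebra_simps power2_eq_square power3_eq_cube)
  also have "L * ((- (D^3) - 16 * x\<^sup>2) / D^3) = - L - L * (16 * x\<^sup>2 / D^3)"
    using D by (simp add: field_simps)
  also have "\<dots> \<le> - L" using L D by simp
  finally show ?thesis .
qed

lemma norm_le_sqrt_card:
  fixes v :: "real^'d"
  assumes "\<And>j. \<bar>v $ j\<bar> \<le> a"
  shows "norm v \<le> sqrt (real CARD('d)) * a"
proof -
  have a: "0 \<le> a" using assms[of undefined] by linarith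
  have "(norm v)\<^sup>2 = (\<Sum>j\<in>UNIV. (v $ j)\<^sup>2)"
  proof -
    have "(norm v)\<^sup>2 = v \<bullet> v" by (rule power2_norm_eq_inner)
    also have "\<dots> = (\<Sum>j\<in>UNIV. (v $ j)\<^sup>2)" unfolding inner_vec_def by (simp add: power2_eq_square)
    finally show ?thesis .
  qed
  also have "\<dots> \<le> (\<Sum>j\<in>(UNIV::'d set). a\<^sup>2)"
    by (intro sum_mono) (metis abs_le_square_iff abs_of_nonneg a assms)
  also have "\<dots> = (sqrt (real CARD('d)) * a)\<^sup>2" by (simp add: power_mult_distrib)
  finally show ?thesis using a by (simp add: power2_le_iff_abs_le)
qed


theorem mainTheorem7:
  fixes M :: "'a measure"
    and X :: "nat \<Rightarrow> nat \<Rightarrow> 'a \<Rightarrow> real^'d"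
    and \<theta>c \<theta>r \<theta>0 :: "real^'d"
    and \<eta> \<delta> :: real
    and B T :: nat
  assumes "prob_space M"
    and "\<theta>c \<noteq> 0" and "\<theta>r \<noteq> 0"
    and "\<eta> > 0"
    and "B \<ge> 1" and "T \<ge> 1"
    and "0 < \<delta>" and "\<delta> < 1"
    and "real CARD('d) > ln (2 * real B * real T / \<delta>) / 4"
    and "prob_space.indep_vars M (\<lambda>_. borel) (\<lambda>(t, i). X t i) ({..<T} \<times> {..<B})"
    and "\<forall>t<T. \<forall>i<B. distributed M lborel (X t i) std_gauss_density"
  shows "measure M {\<omega> \<in> space M.
           norm (sgd \<theta>c \<theta>r \<eta> B \<theta>0 (\<lambda>t i. X t i \<omega>) T - pop_iter \<theta>c \<theta>r \<eta> \<theta>0 T)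
             \<le> \<eta> * (sqrt (2 * real CARD('d) * real T / real B * ln (2 * (real CARD('d) + 1) / \<delta>))
                    + 4 * sqrt (real CARD('d)) * ln (2 * (real CARD('d) + 1) / \<delta>))}
         \<ge> 1 - \<delta>"
proof -
  note P = assms(1) and nz = assms(2,3) and eta = assms(4) and BT = assms(5,6) and del = assms(7,8)
    and ind = assms(10) and dist0 = assms(11)
  interpret prob_space M by (rule P)
  define d where "d = real CARD('d)"
  define K where "K = {..<T} \<times> {..<B}"
  define Z where "Z = (\<lambda>(t, i). X t i)"
  have Kf: "finite K" by (simp add: K_def)
  have Kc: "real (card K) = real T * real B" by (simp add: K_def card_cartesian_product)
  have distZ: "distributed M lborel (Z k) (\<lambda>x. ennreal (std_gauss_density x))" if "k \<in> K" for k
    using that dist0 by (auto simp: K_def Z_def)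
  have indZ: "indep_vars (\<lambda>_. borel) Z K" using ind by (simp add: K_def Z_def)
  have Xm[measurable]: "X t i \<in> borel_measurable M" if "t < T" "i < B" for t i
    using dist0 that by (auto simp: distributed_def)
  define L where "L = ln (2 * (d + 1) / \<delta>)"
  have d1: "1 \<le> d" by (simp add: d_def)
  have Lpos: "0 < L"
  proof -
    have "1 < 2 * (d + 1) / \<delta>" using del d1 by (simp add: field_simps)
    then show ?thesis unfolding L_def by simp
  qed
  have expL: "exp (- L) = \<delta> / (2 * (d + 1))"
    unfolding L_def using del d1 by (simp add: exp_minus exp_ln_iff field_simps)
  define N where "N = real T * real B"
  have Npos: "0 < N" using BT by (simp add: N_def)
  define x0 where "x0 = sqrt (2 * L / N)"
  define R where "R = sqrt (2 * N * L)"
  define a where "a = R + 4 * L"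
  define l where "l = x0 / (1 + 4 * x0)"
  have x0: "0 < x0" using Lpos Npos by (simp add: x0_def)
  have x0R: "x0 * R = 2 * L"
  proof -
    have "x0 * R = sqrt ((2 * L / N) * (2 * N * L))" unfolding x0_def R_def by (rule real_sqrt_mult[symmetric])
    also have "(2 * L / N) * (2 * N * L) = (2 * L)\<^sup>2" using Npos by (simp add: field_simps power2_eq_square)
    also have "sqrt ((2 * L)\<^sup>2) = 2 * L" using Lpos by (intro real_sqrt_unique) auto
    finally show ?thesis .
  qed
  have Nx0: "N * x0\<^sup>2 = 2 * L" using Npos Lpos by (simp add: x0_def)
  have l: "0 < l" "l \<le> 1/4" using x0 by (auto simp: l_def field_simps)
  define mu where "mu = muv \<theta>c \<theta>r"
  define Sj where "Sj j \<omega> = (\<Sum>k\<in>K. (wv \<theta>c \<theta>r (Z k \<omega>) $ j - mu $ j))" for j \<omega>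
  define A where "A p = {\<omega> \<in> space M. a \<le> snd p * Sj (fst p) \<omega>}" for p :: "'d \<times> real"
  define I where "I = (UNIV :: 'd set) \<times> {1, -1 :: real}"
  have Zm[measurable]: "Z k \<in> borel_measurable M" if "k \<in> K" for k
    using distZ[OF that] by (auto simp: distributed_def)
  have Sjm[measurable]: "Sj j \<in> borel_measurable M" for j
    unfolding Sj_def by (intro borel_measurable_sum) (use Zm in measurable)
  have Asets: "A p \<in> sets M" for p unfolding A_def by measurable
  have Ab: "measure M (A p) \<le> \<delta> / (2 * (d + 1))" if "p \<in> I" for p
  proof -
    have s: "snd p = 1 \<or> snd p = -1" using that by (auto simp: I_def)
    have "emeasure M (A p) \<le> ennreal (exp (- l * a + real (card K) * (l\<^sup>2 / 2 + 2 * l^3)))"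
      unfolding A_def Sj_def mu_def
      by (rule chernoff_sum[OF P Kf indZ distZ nz l s])
    also have "- l * a + real (card K) * (l\<^sup>2 / 2 + 2 * l^3) \<le> - L"
      unfolding a_def Kc N_def[symmetric] l_def by (rule alg_chernoff[OF x0 Npos Lpos x0R Nx0])
    finally have "emeasure M (A p) \<le> ennreal (exp (- L))" by (simp add: ennreal_leI order_trans)
    then have "ennreal (measure M (A p)) \<le> ennreal (\<delta> / (2 * (d + 1)))" unfolding expL by (simp add: emeasure_eq_measure)
    moreover have "0 \<le> \<delta> / (2 * (d + 1))" using del d1 by simp
    ultimately show ?thesis by (simp only: ennreal_le_iff)
  qed
  define Bad where "Bad = (\<Union>p\<in>I. A p)"
  have Bad_sets: "Bad \<in> sets M" unfolding Bad_def I_def using Asets by auto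
  have "measure M Bad \<le> (\<Sum>p\<in>I. measure M (A p))"
    unfolding Bad_def by (rule finite_measure_subadditive_finite) (auto simp: I_def Asets)
  also have "\<dots> \<le> (\<Sum>p\<in>I. \<delta> / (2 * (d + 1)))" by (rule sum_mono) (rule Ab)
  also have "\<dots> = 2 * d * (\<delta> / (2 * (d + 1)))" by (simp add: I_def card_cartesian_product d_def)
  also have "\<dots> \<le> \<delta>" using del d1 by (simp add: field_simps)
  finally have mBad: "measure M Bad \<le> \<delta>" .
  define RHS where "RHS = \<eta> * (sqrt (2 * d * real T / real B * L) + 4 * sqrt d * L)"
  define G0 where "G0 = {\<omega> \<in> space M. norm (sgd \<theta>c \<theta>r \<eta> B \<theta>0 (\<lambda>t i. X t i \<omega>) T - pop_iter \<theta>c \<theta>r \<eta> \<theta>0 T) \<le> RHS}"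
  have sm[measurable]: "(\<lambda>\<omega>. \<Sum>t<T. \<Sum>i<B. wv \<theta>c \<theta>r (X t i \<omega>)) \<in> borel_measurable M"
    by (intro borel_measurable_sum) (auto intro: measurable_compose[OF Xm wv_measurable])
  have G0_sets: "G0 \<in> sets M"
  proof -
    have "G0 = {\<omega> \<in> space M. norm (\<theta>0 + (\<eta> / real B) *\<^sub>R (\<Sum>t<T. \<Sum>i<B. wv \<theta>c \<theta>r (X t i \<omega>)) - pop_iter \<theta>c \<theta>r \<eta> \<theta>0 T) \<le> RHS}"
      unfolding G0_def sgd_closed ..
    also have "\<dots> \<in> sets M" by measurable
    finally show ?thesis .
  qed
  have diff_eq: "sgd \<theta>c \<theta>r \<eta> B \<theta>0 (\<lambda>t i. X t i \<omega>) T - pop_iter \<theta>c \<theta>r \<eta> \<theta>0 T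
      = (\<eta> / real B) *\<^sub>R (\<Sum>k\<in>K. (wv \<theta>c \<theta>r (Z k \<omega>) - mu))" for \<omega>
  proof -
    have "(\<Sum>k\<in>K. (wv \<theta>c \<theta>r (Z k \<omega>) - mu)) = (\<Sum>t<T. \<Sum>i<B. wv \<theta>c \<theta>r (X t i \<omega>)) - (real T * real B) *\<^sub>R mu"
    proof -
      have "(\<Sum>k\<in>K. (wv \<theta>c \<theta>r (Z k \<omega>) - mu)) = (\<Sum>k\<in>K. wv \<theta>c \<theta>r (Z k \<omega>)) - (\<Sum>k\<in>K. mu)"
        by (rule sum_subtractf)
      also have "(\<Sum>k\<in>K. mu) = real (card K) *\<^sub>R mu" by (rule sum_constant_scaleR)
      also have "(\<Sum>k\<in>K. wv \<theta>c \<theta>r (Z k \<omega>)) = (\<Sum>t<T. \<Sum>i<B. wv \<theta>c \<theta>r (X t i \<omega>))"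
        unfolding K_def Z_def sum.cartesian_product by (simp add: split_beta)
      finally show ?thesis unfolding Kc .
    qed
    moreover have "(\<eta> / real B) *\<^sub>R ((real T * real B) *\<^sub>R mu) = (real T * (\<eta> / sqrt (2 * pi))) *\<^sub>R v_Delta \<theta>c \<theta>r"
      using BT by (simp add: mu_def muv_def)
    ultimately show ?thesis
      unfolding sgd_closed pop_closed by (simp add: scaleR_diff_right)
  qed
  have good: "\<omega> \<in> G0" if \<omega>: "\<omega> \<in> space M - Bad" for \<omega>
  proof -
    have absS: "\<bar>Sj j \<omega>\<bar> \<le> a" for j
    proof -
      have "\<omega> \<notin> A (j, 1)" "\<omega> \<notin> A (j, -1)" using \<omega> by (auto simp: Bad_def I_def)
      then show ?thesis using \<omega> by (auto simp: A_def)
    qed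
    have "norm (\<Sum>k\<in>K. (wv \<theta>c \<theta>r (Z k \<omega>) - mu)) \<le> sqrt d * a"
      unfolding d_def
      by (rule norm_le_sqrt_card) (use absS in \<open>simp add: Sj_def\<close>)
    then have "norm (sgd \<theta>c \<theta>r \<eta> B \<theta>0 (\<lambda>t i. X t i \<omega>) T - pop_iter \<theta>c \<theta>r \<eta> \<theta>0 T) \<le> (\<eta> / real B) * (sqrt d * a)"
      unfolding diff_eq using eta by (simp add: mult_left_mono divide_right_mono)
    also have "\<dots> \<le> RHS"
    proof -
      have Bp: "1 \<le> real B" using BT by simp
      have e: "sqrt d * R / real B = sqrt (2 * d * real T / real B * L)"
      proof -
        have "sqrt (2 * d * real T / real B * L) = sqrt (d * (2 * N * L) / (real B)\<^sup>2)"
          using Bp by (simp add: N_def field_simps power2_eq_square)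
        also have "\<dots> = sqrt d * R / real B"
          using Bp by (simp add: real_sqrt_divide real_sqrt_mult R_def)
        finally show ?thesis ..
      qed
      have "sqrt d * (4 * L) / real B \<le> 4 * sqrt d * L"
      proof -
        have "sqrt d * 1 \<le> sqrt d * real B" using Bp d1 by (intro mult_left_mono) auto
        then show ?thesis using Bp Lpos by (simp add: field_simps)
      qed
      then have "sqrt d * a / real B \<le> sqrt (2 * d * real T / real B * L) + 4 * sqrt d * L"
        unfolding a_def e[symmetric] by (simp add: distrib_left add_divide_distrib)
      then have "\<eta> * (sqrt d * a / real B) \<le> RHS" unfolding RHS_def using eta by (intro mult_left_mono) auto
      then show ?thesis by simp
    qed
    finally show ?thesis using \<omega> by (simp add: G0_def)
  qed
  have "1 - \<delta> \<le> 1 - measure M Bad" using mBad by simp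
  also have "\<dots> = measure M (space M - Bad)" by (rule prob_compl[symmetric, OF Bad_sets])
  also have "\<dots> \<le> measure M G0" by (rule finite_measure_mono) (use good G0_sets in auto)
  finally show ?thesis unfolding G0_def RHS_def d_def L_def .
qed


end
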